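(* Let $X$ be a discretely geodesic metric space with $\beta$-stable intervals in which all bounded subsets are finite. Fix $z\in X$ and $\alpha>0$, and let $B$ be the closed ball $B(z,2\alpha\beta)$. Then $|\mathscr C(B)|<\infty$, and (1) every $f\in\mathrm E'(X)$ with $f(z)\le\alpha$ satisfies $\mathrm{rk}(A(f))\le\frac12|\mathscr C(B)|$; (2) for every $f\in\mathrm E'(X)$ with $f(z)\le\alpha$ and $\mathrm{rk}(A(f))=0$ there are at most $2^{|\mathscr C(B)|}$ sets $A\in\mathscr A(X)$ with $A\subset A(f)$ and $\mathrm{rk}(A)=1$.
   Context: $X$ is discretely geodesic if $d$ is integer valued and any $x,y$ are joined by an isometric embedding $\gamma\colon\{0,\dots,d(x,y)\}\to X$ with endpoints $x,y$. $I(x,y)=\{u: d(x,u)+d(u,y)=d(x,y)\}$; $C(x,v)=\{y: v\in I(x,y)\}$; $\beta$-stable intervals: Hausdorff distance of $I(x,y)$ and $I(x,y')$ at most $\beta$ whenever $d(y,y')=1$. $\mathscr C(B)$ is the set of all pointed cones $(v,C(x,v))$ with $v\in B$, $x\in X$. For $f\colon X\to\mathbb R$, $A(f)$ is the set of unordered pairs $\{x,y\}$ ($x=y$ allowed) with $f(x)+f(y)=d(x,y)$; $\Delta(X)=\{f: f(x)+f(y)\ge d(x,y)\ \forall x,y\}$; $\mathrm E'(X)=\{f\in\Delta(X):\bigcup A(f)=X\}$; $\mathscr A(X)=\{A(f): f\in\mathrm E'(X)\}$; $\mathrm{rk}(A)=\dim\{g\in\mathbb R^X: g(x)+g(y)=d(x,y)\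 \forall\{x,y\}\in A\}$. *)

theory Defs
  imports "HOL-Analysis.Analysis" "HOL-Library.Extended_Nat"
begin

text \<open>The metric space X is the whole type 'a, with distance function d.\<close>

definition metric_on :: "('a \<Rightarrow> 'a \<Rightarrow> real) \<Rightarrow> bool" where
  "metric_on d \<longleftrightarrow> (\<forall>x y. d x y = 0 \<longleftrightarrow> x = y) \<and> (\<forall>x y. d x y = d y x)
     \<and> (\<forall>x y z. d x z \<le> d x y + d y z)"

definition discretely_geodesic :: "('a \<Rightarrow> 'a \<Rightarrow> real) \<Rightarrow> bool" where
  "discretely_geodesic d \<longleftrightarrow> (\<forall>x y. d x y \<in> \<int>) \<and>
     (\<forall>x y. \<exists>\<gamma> :: nat \<Rightarrow> 'a. \<gamma> 0 = x \<and> \<gamma> (nat \<lfloor>d x y\<rfloor>) = y \<and>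
        (\<forall>i j. i \<le> nat \<lfloor>d x y\<rfloor> \<longrightarrow> j \<le> nat \<lfloor>d x y\<rfloor> \<longrightarrow>
            d (\<gamma> i) (\<gamma> j) = \<bar>real i - real j\<bar>))"

definition bounded_subsets_finite :: "('a \<Rightarrow> 'a \<Rightarrow> real) \<Rightarrow> bool" where
  "bounded_subsets_finite d \<longleftrightarrow>
     (\<forall>S. (\<exists>c r. \<forall>y\<in>S. d c y \<le> r) \<longrightarrow> finite S)"

definition closed_ball_d :: "('a \<Rightarrow> 'a \<Rightarrow> real) \<Rightarrow> 'a \<Rightarrow> real \<Rightarrow> 'a set" where
  "closed_ball_d d z r = {y. d z y \<le> r}"

definition interval :: "('a \<Rightarrow> 'a \<Rightarrow> real) \<Rightarrow> 'a \<Rightarrow> 'a \<Rightarrow> 'a set" where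
  "interval d x y = {u. d x u + d u y = d x y}"

definition cone :: "('a \<Rightarrow> 'a \<Rightarrow> real) \<Rightarrow> 'a \<Rightarrow> 'a \<Rightarrow> 'a set" where
  "cone d x v = {y. v \<in> interval d x y}"

definition hausdorff_dist :: "('a \<Rightarrow> 'a \<Rightarrow> real) \<Rightarrow> 'a set \<Rightarrow> 'a set \<Rightarrow> ereal" where
  "hausdorff_dist d A B = max (SUP a\<in>A. INF b\<in>B. ereal (d a b)) (SUP b\<in>B. INF a\<in>A. ereal (d a b))"

definition stable_intervals :: "('a \<Rightarrow> 'a \<Rightarrow> real) \<Rightarrow> real \<Rightarrow> bool" where
  "stable_intervals d \<beta> \<longleftrightarrow>
     (\<forall>x y y'. d y y' = 1 \<longrightarrow> hausdorff_dist d (interval d x y) (interval d x y') \<le> ereal \<beta>)"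

definition pointed_cones :: "('a \<Rightarrow> 'a \<Rightarrow> real) \<Rightarrow> 'a set \<Rightarrow> ('a \<times> 'a set) set" where
  "pointed_cones d B = {(v, cone d x v) | v x. v \<in> B}"

text \<open>Unordered pairs {x,y} (x = y allowed) are represented as sets {x,y}.\<close>
definition Apairs :: "('a \<Rightarrow> 'a \<Rightarrow> real) \<Rightarrow> ('a \<Rightarrow> real) \<Rightarrow> 'a set set" where
  "Apairs d f = {{x, y} | x y. f x + f y = d x y}"

definition Delta :: "('a \<Rightarrow> 'a \<Rightarrow> real) \<Rightarrow> ('a \<Rightarrow> real) set" where
  "Delta d = {f. \<forall>x y. f x + f y \<ge> d x y}"

definition Eprime :: "('a \<Rightarrow> 'a \<Rightarrow> real) \<Rightarrow> ('a \<Rightarrow> real) set" where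
  "Eprime d = {f \<in> Delta d. \<Union> (Apairs d f) = UNIV}"

definition Acal :: "('a \<Rightarrow> 'a \<Rightarrow> real) \<Rightarrow> 'a set set set" where
  "Acal d = Apairs d ` Eprime d"

definition fun_lin_indep :: "('a \<Rightarrow> real) set \<Rightarrow> bool" where
  "fun_lin_indep F \<longleftrightarrow> finite F \<and>
     (\<forall>c. (\<forall>x. (\<Sum>g\<in>F. c g * g x) = 0) \<longrightarrow> (\<forall>g\<in>F. c g = 0))"

definition fun_dim :: "('a \<Rightarrow> real) set \<Rightarrow> enat" where
  "fun_dim V = (SUP F\<in>{F. F \<subseteq> V \<and> fun_lin_indep F}. enat (card F))"

definition fun_aff_dim :: "('a \<Rightarrow> real) set \<Rightarrow> enat" where
  "fun_aff_dim S = fun_dim {(\<lambda>x. g x - h x) | g h. g \<in> S \<and> h \<in> S}"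

definition rk :: "('a \<Rightarrow> 'a \<Rightarrow> real) \<Rightarrow> 'a set set \<Rightarrow> enat" where
  "rk d A = fun_aff_dim {g. \<forall>x y. {x, y} \<in> A \<longrightarrow> g x + g y = d x y}"

end

theory Submission
  imports Defs
begin


lemma int_lt1: "(p::real) \<in> \<int> \<Longrightarrow> q \<in> \<int> \<Longrightarrow> p < q + 1 \<Longrightarrow> p \<le> q"
proof -
  assume "p \<in> \<int>" "q \<in> \<int>" "p < q + 1"
  then obtain m n where "p = of_int m" "q = of_int n" by (auto elim!: Ints_cases)
  with \<open>p < q + 1\<close> have "m < n + 1" by simp
  then have "m \<le> n" by simp
  then show "p \<le> q" using \<open>p = of_int m\<close> \<open>q = of_int n\<close> by simp
qed

lemma lin_bound:
  fixes G :: "'i \<Rightarrow> 'a \<Rightarrow> real"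
  assumes "finite R"
  shows "finite I \<Longrightarrow> (\<forall>a. (\<forall>r\<in>R. (\<Sum>i\<in>I. a i * G i r) = 0) \<longrightarrow> (\<forall>i\<in>I. a i = 0)) \<Longrightarrow> card I \<le> card R"
  using assms
proof (induction R arbitrary: I G rule: finite_induct)
  case empty
  have "\<forall>i\<in>I. (1::real) = 0" using empty.prems(2)[rule_format, of "\<lambda>_. 1"] by blast
  then have "I = {}" by fastforce
  then show ?case by simp
next
  case (insert r0 R)
  show ?case
  proof (cases "\<exists>i0\<in>I. G i0 r0 \<noteq> 0")
    case False
    have c: "\<forall>a. (\<forall>r\<in>R. (\<Sum>i\<in>I. a i * G i r) = 0) \<longrightarrow> (\<forall>i\<in>I. a i = 0)"
    proof (intro allI impI)
      fix a assume h: "\<forall>r\<in>R. (\<Sum>i\<in>I. a i * G i r) = 0"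
      have "(\<Sum>i\<in>I. a i * G i r0) = (\<Sum>i\<in>I. 0)" using False by (intro sum.cong) auto
      then have "(\<Sum>i\<in>I. a i * G i r0) = 0" by simp
      then have "\<forall>r\<in>insert r0 R. (\<Sum>i\<in>I. a i * G i r) = 0" using h by simp
      then show "\<forall>i\<in>I. a i = 0" using insert.prems(2)[rule_format, of a] by blast
    qed
    have "card I \<le> card R" by (rule insert.IH[OF insert.prems(1) c])
    then show ?thesis using insert.hyps by simp
  next
    case True
    then obtain i0 where i0: "i0 \<in> I" "G i0 r0 \<noteq> 0" by blast
    define I' where "I' = I - {i0}"
    define G' where "G' = (\<lambda>i r. G i r - (G i r0 / G i0 r0) * G i0 r)"
    have c: "\<forall>a. (\<forall>r\<in>R. (\<Sum>i\<in>I'. a i * G' i r) = 0) \<longrightarrow> (\<forall>i\<in>I'. a i = 0)"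
    proof (intro allI impI)
      fix a assume h: "\<forall>r\<in>R. (\<Sum>i\<in>I'. a i * G' i r) = 0"
      define S0 where "S0 = (\<Sum>j\<in>I'. a j * G j r0)"
      define b where "b = (\<lambda>i. if i = i0 then - S0 / G i0 r0 else a i)"
      have eq: "(\<Sum>i\<in>I. b i * G i r) = (\<Sum>i\<in>I'. a i * G' i r)" for r
      proof -
        have e1: "(\<Sum>i\<in>I. b i * G i r) = b i0 * G i0 r + (\<Sum>i\<in>I'. b i * G i r)"
          unfolding I'_def using i0 insert.prems(1) by (simp add: sum.remove)
        have e2: "(\<Sum>i\<in>I'. b i * G i r) = (\<Sum>i\<in>I'. a i * G i r)"
          unfolding b_def I'_def by (intro sum.cong) auto
        have e3: "(\<Sum>i\<in>I'. a i * G' i r) = (\<Sum>i\<in>I'. a i * G i r - (a i * G i r0) * (G i0 r / G i0 r0))"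
          unfolding G'_def by (intro sum.cong) (simp_all add: right_diff_distrib)
        have e4: "(\<Sum>i\<in>I'. a i * G i r - (a i * G i r0) * (G i0 r / G i0 r0))
             = (\<Sum>i\<in>I'. a i * G i r) - S0 * (G i0 r / G i0 r0)"
          unfolding S0_def by (simp only: sum_subtractf sum_distrib_right)
        have e5: "b i0 * G i0 r = - (S0 * (G i0 r / G i0 r0))"
          unfolding b_def by simp
        show ?thesis using e1 e2 e3 e4 e5 by linarith
      qed
      have "(\<Sum>i\<in>I'. a i * G' i r0) = (\<Sum>i\<in>I'. 0)"
        using i0 unfolding G'_def by (intro sum.cong) simp_all
      then have "(\<Sum>i\<in>I'. a i * G' i r0) = 0" by simp
      then have "\<forall>r\<in>insert r0 R. (\<Sum>i\<in>I. b i * G i r) = 0" using h eq by simp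
      then have bz: "\<forall>i\<in>I. b i = 0" using insert.prems(2)[rule_format, of b] by blast
      show "\<forall>i\<in>I'. a i = 0"
      proof
        fix i assume "i \<in> I'"
        then have "i \<in> I" "i \<noteq> i0" by (auto simp: I'_def)
        then show "a i = 0" using bz[rule_format, of i] unfolding b_def by simp
      qed
    qed
    have "finite I'" using insert.prems(1) unfolding I'_def by simp
    then have "card I' \<le> card R" by (rule insert.IH[OF _ c])
    moreover have "card I > 0" using i0(1) insert.prems(1) card_gt_0_iff by blast
    then have "card I = card I' + 1" unfolding I'_def using i0 insert.prems(1)
      by (simp add: card_Diff_singleton)
    ultimately show ?thesis using insert.hyps by simp
  qed
qed


locale X =
  fixes d :: "'a \<Rightarrow> 'a \<Rightarrow> real" and \<beta> :: real
  assumes met: "metric_on d" and dg: "discretely_geodesic d"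
    and stab: "stable_intervals d \<beta>" and bsf: "bounded_subsets_finite d"
begin

lemma d0[simp]: "d x x = 0" using met unfolding metric_on_def by auto
lemma deq: "d x y = 0 \<longleftrightarrow> x = y" using met unfolding metric_on_def by auto
lemma dsym: "d x y = d y x" using met unfolding metric_on_def by auto
lemma tri: "d x z \<le> d x y + d y z" using met unfolding metric_on_def by auto
lemma dnn: "0 \<le> d x y" using tri[where x=x and y=y and z=x] dsym[of x y] d0[of x] by linarith
lemma dint: "d x y \<in> \<int>" using dg unfolding discretely_geodesic_def by auto

lemma dlt1: "d x y < d a b + 1 \<Longrightarrow> d x y \<le> d a b"
  using int_lt1 dint by blast

lemma isym: "interval d x y = interval d y x"
  unfolding interval_def using dsym by (auto simp: add.commute)

lemma ifin: "finite (interval d x y)"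
proof -
  have "\<forall>u\<in>interval d x y. d x u \<le> d x y"
  proof
    fix u assume "u \<in> interval d x y"
    then have "d x u + d u y = d x y" by (simp add: interval_def)
    then show "d x u \<le> d x y" using dnn[of u y] by linarith
  qed
  then show ?thesis using bsf unfolding bounded_subsets_finite_def
    by (metis (no_types, lifting))
qed

lemma ileft[simp]: "x \<in> interval d x y" unfolding interval_def by simp
lemma iright[simp]: "y \<in> interval d x y" unfolding interval_def by simp

lemma ball_fin: "finite {w. d v w \<le> r}"
  using bsf unfolding bounded_subsets_finite_def by (metis (no_types, lifting) mem_Collect_eq)

lemma stab_pt:
  assumes "d y y' = 1" "u \<in> interval d x y"
  shows "\<exists>u'\<in>interval d x y'. d u u' \<le> \<beta>"
proof -
  have "hausdorff_dist d (interval d x y) (interval d x y') \<le> ereal \<beta>"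
    using stab assms(1) unfolding stable_intervals_def by blast
  then have "(SUP a\<in>interval d x y. INF b\<in>interval d x y'. ereal (d a b)) \<le> ereal \<beta>"
    unfolding hausdorff_dist_def by simp
  then have le: "(INF b\<in>interval d x y'. ereal (d u b)) \<le> ereal \<beta>"
    using assms(2) by (meson SUP_le_iff)
  have fin: "finite ((\<lambda>b. ereal (d u b)) ` interval d x y')" using ifin by simp
  have ne: "(\<lambda>b. ereal (d u b)) ` interval d x y' \<noteq> {}" using ileft[of x y'] by blast
  have "Inf ((\<lambda>b. ereal (d u b)) ` interval d x y') \<in> (\<lambda>b. ereal (d u b)) ` interval d x y'"
    using Min_in[OF fin ne] Min_Inf[OF fin ne] by simp
  then obtain b where "b \<in> interval d x y'" "ereal (d u b) = (INF b\<in>interval d x y'. ereal (d u b))"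
    by auto
  then have "ereal (d u b) \<le> ereal \<beta>" using le by simp
  then have "d u b \<le> \<beta>" by simp
  then show ?thesis using \<open>b \<in> interval d x y'\<close> by blast
qed

lemma stab_pt2:
  assumes "d y y' = 1" "u \<in> interval d x y'"
  shows "\<exists>u'\<in>interval d x y. d u u' \<le> \<beta>"
  using stab_pt[of y' y u x] assms dsym by auto

lemma geo: "\<exists>\<gamma>. \<gamma> 0 = x \<and> \<gamma> (nat \<lfloor>d x y\<rfloor>) = y \<and>
        (\<forall>i j. i \<le> nat \<lfloor>d x y\<rfloor> \<longrightarrow> j \<le> nat \<lfloor>d x y\<rfloor> \<longrightarrow>
            d (\<gamma> i) (\<gamma> j) = \<bar>real i - real j\<bar>)"
  using dg unfolding discretely_geodesic_def by blast

lemma dnat: "real (nat \<lfloor>d x y\<rfloor>) = d x y"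
  using dint dnn by (simp add: of_nat_nat)

lemma beta_nn: fixes x y :: 'a assumes "x \<noteq> y" shows "0 \<le> \<beta>"
proof -
  obtain \<gamma> where g: "\<gamma> 0 = x" "\<gamma> (nat \<lfloor>d x y\<rfloor>) = y" 
    "\<forall>i j. i \<le> nat \<lfloor>d x y\<rfloor> \<longrightarrow> j \<le> nat \<lfloor>d x y\<rfloor> \<longrightarrow> d (\<gamma> i) (\<gamma> j) = \<bar>real i - real j\<bar>"
    using geo by blast
  have "d x y \<noteq> 0" using assms deq by auto
  then have n0: "nat \<lfloor>d x y\<rfloor> \<noteq> 0" using dnat[of x y] by (metis of_nat_0)
  have "1 \<le> nat \<lfloor>d x y\<rfloor>" using n0 by linarith
  then have "d (\<gamma> 1) (\<gamma> 0) = 1" using g(3)[rule_format, of 1 0] by simp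
  then obtain u' where "u' \<in> interval d (\<gamma> 1) (\<gamma> 0)" "d (\<gamma> 1) u' \<le> \<beta>"
    using stab_pt[of "\<gamma> 1" "\<gamma> 0" "\<gamma> 1" "\<gamma> 1"] by auto
  then show ?thesis using dnn[of "\<gamma> 1" u'] by linarith
qed


lemma isub: assumes "y' \<in> interval d x y" shows "interval d x y' \<subseteq> interval d x y"
proof
  fix u assume "u \<in> interval d x y'"
  then have "d x u + d u y' = d x y'" by (simp add: interval_def)
  moreover have "d x y' + d y' y = d x y" using assms by (simp add: interval_def)
  moreover have "d u y \<le> d u y' + d y' y" by (rule tri)
  moreover have "d x y \<le> d x u + d u y" by (rule tri)
  ultimately show "u \<in> interval d x y" unfolding interval_def by simp
qed

lemma Gwalk:
  assumes b0: "0 \<le> \<beta>"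
  shows "\<exists>v\<in>interval d x y. d z v \<le> \<beta> * (d x z + d z y - d x y)"
proof -
  obtain \<gamma> where g: "\<gamma> 0 = z" "\<gamma> (nat \<lfloor>d z y\<rfloor>) = y"
    "\<forall>i j. i \<le> nat \<lfloor>d z y\<rfloor> \<longrightarrow> j \<le> nat \<lfloor>d z y\<rfloor> \<longrightarrow> d (\<gamma> i) (\<gamma> j) = \<bar>real i - real j\<bar>"
    using geo by blast
  define n where "n = nat \<lfloor>d z y\<rfloor>"
  have gn: "\<And>i j. i \<le> n \<Longrightarrow> j \<le> n \<Longrightarrow> d (\<gamma> i) (\<gamma> j) = \<bar>real i - real j\<bar>"
    using g(3) unfolding n_def by blast
  have claim: "k \<le> n \<Longrightarrow> \<exists>v\<in>interval d x (\<gamma> k). d z v \<le> \<beta> * (d x z + real k - d x (\<gamma> k))" for k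
  proof (induction k)
    case 0
    show ?case
    proof (rule bexI[of _ z])
      show "z \<in> interval d x (\<gamma> 0)" using g(1) by simp
      show "d z z \<le> \<beta> * (d x z + real 0 - d x (\<gamma> 0))" using g(1) by simp
    qed
  next
    case (Suc k)
    then obtain v where v: "v \<in> interval d x (\<gamma> k)" "d z v \<le> \<beta> * (d x z + real k - d x (\<gamma> k))"
      by auto
    have d1: "d (\<gamma> k) (\<gamma> (Suc k)) = 1" using gn[of k "Suc k"] Suc.prems by simp
    have t: "d x (\<gamma> (Suc k)) \<le> d x (\<gamma> k) + 1" using tri[of x "\<gamma> (Suc k)" "\<gamma> k"] d1 by simp
    show ?case
    proof (cases "d x (\<gamma> (Suc k)) = d x (\<gamma> k) + 1")
      case True
      then have "\<gamma> k \<in> interval d x (\<gamma> (Suc k))" using d1 by (simp add: interval_def)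
      then have "v \<in> interval d x (\<gamma> (Suc k))" using isub v(1) by blast
      moreover have "d x z + real (Suc k) - d x (\<gamma> (Suc k)) = d x z + real k - d x (\<gamma> k)"
        using True by simp
      then have "d z v \<le> \<beta> * (d x z + real (Suc k) - d x (\<gamma> (Suc k)))"
        using v(2) by metis
      ultimately show ?thesis by blast
    next
      case False
      then have le: "d x (\<gamma> (Suc k)) \<le> d x (\<gamma> k)" using t dlt1 by fastforce
      obtain v' where v': "v' \<in> interval d x (\<gamma> (Suc k))" "d v v' \<le> \<beta>"
        using stab_pt[OF d1 v(1)] by blast
      have "d z v' \<le> d z v + d v v'" by (rule tri)
      also have "\<dots> \<le> \<beta> * (d x z + real k - d x (\<gamma> k)) + \<beta>" using v(2) v'(2) by linarith
      also have "\<dots> = \<beta> * (d x z + real k - d x (\<gamma> k) + 1)" by (simp add: algebra_simps)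
      also have "\<dots> \<le> \<beta> * (d x z + real (Suc k) - d x (\<gamma> (Suc k)))"
        using le b0 by (intro mult_left_mono) auto
      finally show ?thesis using v'(1) by blast
    qed
  qed
  from claim[of n] obtain v where "v \<in> interval d x y" "d z v \<le> \<beta> * (d x z + real n - d x y)"
    using g(2) unfolding n_def by auto
  moreover have "real n = d z y" unfolding n_def by (rule dnat)
  ultimately show ?thesis by auto
qed

lemma Lv:
  assumes b0: "0 \<le> \<beta>" and f: "f \<in> Delta d" and t: "f x + f y = d x y" and fz: "f z \<le> \<alpha>"
  shows "\<exists>v. v \<in> interval d x y \<and> v \<in> closed_ball_d d z (2 * \<alpha> * \<beta>)"
proof -
  obtain v where v: "v \<in> interval d x y" "d z v \<le> \<beta> * (d x z + d z y - d x y)"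
    using Gwalk[OF b0] by blast
  have "d x z \<le> f x + f z" "d z y \<le> f z + f y" using f unfolding Delta_def by auto
  then have "d x z + d z y - d x y \<le> 2 * \<alpha>" using t fz by linarith
  then have "\<beta> * (d x z + d z y - d x y) \<le> \<beta> * (2 * \<alpha>)" by (rule mult_left_mono[OF _ b0])
  then have "d z v \<le> 2 * \<alpha> * \<beta>" using v(2) by (simp add: algebra_simps)
  then show ?thesis using v(1) unfolding closed_ball_d_def by auto
qed

lemma cone_iff: "y \<in> cone d x v \<longleftrightarrow> d x v + d v y = d x y"
  unfolding cone_def interval_def by simp

lemma pred:
  assumes "d v y = real (Suc n)"
  shows "\<exists>y'. d v y' = real n \<and> d y' y = 1"
proof -
  obtain \<gamma> where g: "\<gamma> 0 = v" "\<gamma> (nat \<lfloor>d v y\<rfloor>) = y"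
    "\<forall>i j. i \<le> nat \<lfloor>d v y\<rfloor> \<longrightarrow> j \<le> nat \<lfloor>d v y\<rfloor> \<longrightarrow> d (\<gamma> i) (\<gamma> j) = \<bar>real i - real j\<bar>"
    using geo by blast
  have N: "nat \<lfloor>d v y\<rfloor> = Suc n" using dnat[of v y] assms by simp
  have "d (\<gamma> 0) (\<gamma> n) = real n" using g(3)[rule_format, of 0 n] N by simp
  moreover have "d (\<gamma> n) (\<gamma> (Suc n)) = 1" using g(3)[rule_format, of n "Suc n"] N by simp
  ultimately show ?thesis using g(1,2) N by auto
qed

lemma cone_key:
  assumes key: "\<forall>w. d v w \<le> \<beta> \<longrightarrow> d x w - d x v = d x' w - d x' v"
  shows "cone d x v \<subseteq> cone d x' v"
proof -
  have "\<forall>y. d v y = real n \<longrightarrow> y \<in> cone d x v \<longrightarrow> y \<in> cone d x' v" for n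
  proof (induction n)
    case 0
    then show ?case by (auto simp: deq cone_iff)
  next
    case (Suc n)
    show ?case
    proof (intro allI impI)
      fix y assume dy: "d v y = real (Suc n)" and yc: "y \<in> cone d x v"
      obtain y' where y': "d v y' = real n" "d y' y = 1" using pred[OF dy] by blast
      have "d x y' \<le> d x v + d v y'" by (rule tri)
      moreover have "d x y \<le> d x y' + d y' y" by (rule tri)
      moreover have "d x v + d v y = d x y" using yc cone_iff by blast
      ultimately have "y' \<in> cone d x v" using y' dy cone_iff by simp
      then have "y' \<in> cone d x' v" using Suc.IH y'(1) by blast
      then have "v \<in> interval d x' y'" unfolding cone_def by simp
      then obtain u where u: "u \<in> interval d x' y" "d v u \<le> \<beta>" using stab_pt[OF y'(2)] by blast
      have "d x' u + d u y = d x' y" using u(1) by (simp add: interval_def)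
      moreover have "d x u - d x v = d x' u - d x' v" using key u(2) by blast
      moreover have "d x y \<le> d x u + d u y" by (rule tri)
      moreover have "d x v + d v y = d x y" using yc cone_iff by blast
      moreover have "d x' y \<le> d x' v + d v y" by (rule tri)
      ultimately show "y \<in> cone d x' v" using cone_iff by fastforce
    qed
  qed
  then show ?thesis using dnat by (metis subsetI)
qed


lemma cone_key_eq:
  assumes key: "\<forall>w. d v w \<le> \<beta> \<longrightarrow> d x w - d x v = d x' w - d x' v"
  shows "cone d x v = cone d x' v"
  using cone_key[OF key] cone_key[of v x' x] key by (metis subset_antisym)

lemma Kfin: "finite {r::real. r \<in> \<int> \<and> \<bar>r\<bar> \<le> b}"
proof -
  define N where "N = \<lceil>\<bar>b\<bar>\<rceil>"
  have "{r::real. r \<in> \<int> \<and> \<bar>r\<bar> \<le> b} \<subseteq> of_int ` {-N..N}"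
  proof
    fix r :: real assume "r \<in> {r. r \<in> \<int> \<and> \<bar>r\<bar> \<le> b}"
    then obtain m where m: "r = of_int m" "\<bar>of_int m\<bar> \<le> b" by (auto elim!: Ints_cases)
    have "b \<le> of_int N" unfolding N_def by (meson abs_ge_self le_of_int_ceiling order_trans)
    then have "\<bar>real_of_int m\<bar> \<le> of_int N" using m(2) by linarith
    then have "\<bar>m\<bar> \<le> N" by linarith
    then have "m \<in> {-N..N}" by auto
    then show "r \<in> of_int ` {-N..N}" using m(1) by blast
  qed
  then show ?thesis by (rule finite_subset) simp
qed

lemma cones_fin: "finite {cone d x v | x. True}"
proof -
  define Bv where "Bv = {w. d v w \<le> \<beta>}"
  define K where "K = {r::real. r \<in> \<int> \<and> \<bar>r\<bar> \<le> \<beta>}"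
  define key where "key = (\<lambda>x. restrict (\<lambda>w. d x w - d x v) Bv)"
  have keyin: "key x \<in> PiE Bv (\<lambda>_. K)" for x
  proof -
    have "d x w - d x v \<in> K" if "w \<in> Bv" for w
    proof -
      have "d x w \<le> d x v + d v w" "d x v \<le> d x w + d w v" by (rule tri)+
      then have "\<bar>d x w - d x v\<bar> \<le> \<beta>" using that dsym[of v w] unfolding Bv_def by auto
      moreover have "d x w - d x v \<in> \<int>" using dint by (simp add: Ints_diff)
      ultimately show ?thesis unfolding K_def by simp
    qed
    then show ?thesis unfolding key_def by auto
  qed
  have fin: "finite (PiE Bv (\<lambda>_. K))"
    using ball_fin Kfin unfolding Bv_def K_def by (intro finite_PiE) auto
  have "{cone d x v | x. True} \<subseteq> (\<lambda>k. cone d (SOME x. key x = k) v) ` PiE Bv (\<lambda>_. K)"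
  proof
    fix C assume "C \<in> {cone d x v | x. True}"
    then obtain x where C: "C = cone d x v" by auto
    define x' where "x' = (SOME x'. key x' = key x)"
    have "key x' = key x" unfolding x'_def by (rule someI) simp
    then have "\<forall>w. d v w \<le> \<beta> \<longrightarrow> d x w - d x v = d x' w - d x' v"
      unfolding key_def Bv_def by (metis (mono_tags, lifting) mem_Collect_eq restrict_apply')
    then have "C = cone d x' v" using C cone_key_eq by blast
    then show "C \<in> (\<lambda>k. cone d (SOME x. key x = k) v) ` PiE Bv (\<lambda>_. K)"
      using keyin[of x] unfolding x'_def by blast
  qed
  then show ?thesis using fin finite_surj by blast
qed

lemma pc_fin: assumes "finite B" shows "finite (pointed_cones d B)"
proof -
  have "pointed_cones d B \<subseteq> Sigma B (\<lambda>v. {cone d x v | x. True})"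
    unfolding pointed_cones_def by auto
  moreover have "finite (Sigma B (\<lambda>v. {cone d x v | x. True}))"
    using assms cones_fin by auto
  ultimately show ?thesis by (rule finite_subset)
qed


lemma Ap_iff: "{x, y} \<in> Apairs d g \<longleftrightarrow> g x + g y = d x y"
proof
  assume "{x, y} \<in> Apairs d g"
  then obtain a b where ab: "{x, y} = {a, b}" "g a + g b = d a b" unfolding Apairs_def by blast
  then have "(x = a \<and> y = b) \<or> (x = b \<and> y = a)" by (simp add: doubleton_eq_iff)
  then show "g x + g y = d x y" using ab(2) dsym[of a b] by (auto simp: add.commute)
qed (auto simp: Apairs_def)

lemma cover: assumes "g \<in> Eprime d" shows "\<exists>y. g x + g y = d x y"
proof -
  have "x \<in> \<Union> (Apairs d g)" using assms unfolding Eprime_def by auto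
  then obtain a b where ab: "x \<in> {a, b}" "g a + g b = d a b" unfolding Apairs_def by blast
  then show ?thesis
  proof (cases "x = a")
    case True then show ?thesis using ab(2) by blast
  next
    case False then have "x = b" using ab(1) by simp
    then show ?thesis using ab(2) dsym[of a b] by (metis add.commute)
  qed
qed

lemma EDelta: "g \<in> Eprime d \<Longrightarrow> d x y \<le> g x + g y"
  unfolding Eprime_def Delta_def by auto

lemma Lsame:
  assumes f: "\<And>a b. d a b \<le> f a + f b"
    and t: "f x + f y = d x y" "v \<in> interval d x y"
    and t1: "f x1 + f y1 = d x1 y1" "v \<in> interval d x1 y1"
    and c: "cone d x v = cone d x1 v"
  shows "f x1 + f y = d x1 y"
proof -
  have "y \<in> cone d x v" using t(2) unfolding cone_def by simp
  then have "y \<in> cone d x1 v" using c by simp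
  then have e1: "d x1 v + d v y = d x1 y" by (simp add: cone_iff)
  have "y1 \<in> cone d x1 v" using t1(2) unfolding cone_def by simp
  then have "y1 \<in> cone d x v" using c by simp
  then have e2: "d x v + d v y1 = d x y1" by (simp add: cone_iff)
  have "d x v + d v y = d x y" "d x1 v + d v y1 = d x1 y1" using t(2) t1(2) by (auto simp: interval_def)
  moreover have "d x1 y \<le> f x1 + f y" "d x y1 \<le> f x + f y1" using f by auto
  ultimately show ?thesis using e1 e2 t(1) t1(1) by linarith
qed

end

locale Y = X +
  fixes f :: "'a \<Rightarrow> real" and \<alpha> :: real and z :: 'a
  assumes fE: "f \<in> Eprime d" and fz: "f z \<le> \<alpha>"
begin

abbreviation "BB \<equiv> closed_ball_d d z (2 * \<alpha> * \<beta>)"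
abbreviation "Q \<equiv> pointed_cones d BB"

definition real_of :: "'a \<times> 'a set \<Rightarrow> 'a \<Rightarrow> bool" where
  "real_of c x \<longleftrightarrow> (\<exists>y v. f x + f y = d x y \<and> v \<in> BB \<and> v \<in> interval d x y \<and> c = (v, cone d x v))"

definition Dk :: "('a \<Rightarrow> real) \<Rightarrow> bool" where
  "Dk h \<longleftrightarrow> (\<forall>x y. f x + f y = d x y \<longrightarrow> h x + h y = 0)"

lemma fD: "d x y \<le> f x + f y" using EDelta[OF fE] .

lemma Qfin: "finite Q"
  using pc_fin ball_fin unfolding closed_ball_d_def by blast

lemma real_in: "real_of c x \<Longrightarrow> c \<in> Q"
  unfolding real_of_def pointed_cones_def by blast

lemma real_ex: assumes "0 \<le> \<beta>" shows "\<exists>c. real_of c x"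
proof -
  obtain y where y: "f x + f y = d x y" using cover[OF fE] by blast
  obtain v where "v \<in> interval d x y" "v \<in> BB"
    using Lv[OF assms _ y fz] fE unfolding Eprime_def by blast
  then show ?thesis using y unfolding real_of_def by blast
qed

lemma real_tight: assumes "real_of c x" "real_of c x1" "f x1 + f y1 = d x1 y1" "fst c \<in> interval d x1 y1"
  shows "f x + f y1 = d x y1"
proof -
  obtain y v where a: "f x + f y = d x y" "v \<in> interval d x y" "c = (v, cone d x v)"
    using assms(1) unfolding real_of_def by blast
  have "cone d x1 v = cone d x v" using assms(2) a(3) unfolding real_of_def by auto
  then show ?thesis using Lsame[OF fD assms(3) _ a(1,2)] assms(4) a(3) by simp
qed

lemma real_same: assumes "Dk h" "real_of c x" "real_of c x1" shows "h x = h x1"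
proof -
  obtain y1 v1 where a: "f x1 + f y1 = d x1 y1" "v1 \<in> interval d x1 y1" "c = (v1, cone d x1 v1)"
    using assms(3) unfolding real_of_def by blast
  have "f x + f y1 = d x y1" using real_tight[OF assms(2,3) a(1)] a by simp
  then have "h x + h y1 = 0" using assms(1) unfolding Dk_def by blast
  moreover have "h x1 + h y1 = 0" using assms(1) a(1) unfolding Dk_def by blast
  ultimately show ?thesis by linarith
qed


definition good :: "'a set \<Rightarrow> bool" where
  "good R \<longleftrightarrow> finite R \<and> (\<forall>h. Dk h \<longrightarrow> (\<forall>r\<in>R. h r = 0) \<longrightarrow> (\<forall>x. h x = 0))"

lemma lin_to:
  assumes g: "good R" and F: "F \<subseteq> Collect Dk" and ind: "fun_lin_indep F"
  shows "card F \<le> card R"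
proof -
  have finF: "finite F" using ind unfolding fun_lin_indep_def by blast
  have "\<forall>a. (\<forall>r\<in>R. (\<Sum>g\<in>F. a g * g r) = 0) \<longrightarrow> (\<forall>g\<in>F. a g = 0)"
  proof (intro allI impI)
    fix a assume h0: "\<forall>r\<in>R. (\<Sum>g\<in>F. a g * g r) = 0"
    define k where "k = (\<lambda>x. \<Sum>g\<in>F. a g * g x)"
    have "Dk k" unfolding Dk_def
    proof (intro allI impI)
      fix x y assume t: "f x + f y = d x y"
      have "k x + k y = (\<Sum>g\<in>F. a g * (g x + g y))"
        unfolding k_def by (simp add: sum.distrib[symmetric] algebra_simps)
      also have "\<dots> = (\<Sum>g\<in>F. 0)"
        using F t unfolding Dk_def by (intro sum.cong) auto
      finally show "k x + k y = 0" by simp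
    qed
    then have "\<forall>x. k x = 0" using g h0 unfolding good_def k_def by blast
    then show "\<forall>g\<in>F. a g = 0" using ind unfolding fun_lin_indep_def k_def by blast
  qed
  then show ?thesis using lin_bound[of R F "\<lambda>g. g"] g finF unfolding good_def by blast
qed

lemma good_ex: assumes "0 \<le> \<beta>" shows "\<exists>R. good R"
proof -
  define R0 where "R0 = (\<lambda>c. SOME x. real_of c x) ` Q"
  have "good R0" unfolding good_def
  proof (intro conjI allI impI)
    show "finite R0" unfolding R0_def using Qfin by simp
    fix h x assume Dh: "Dk h" and z0: "\<forall>r\<in>R0. h r = 0"
    obtain c where c: "real_of c x" using real_ex[OF assms] by blast
    define x0 where "x0 = (SOME x. real_of c x)"
    have x0: "real_of c x0" unfolding x0_def using c by (rule someI)
    have "x0 \<in> R0" unfolding R0_def x0_def using real_in[OF c] by blast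
    then show "h x = 0" using real_same[OF Dh c x0] z0 by simp
  qed
  then show ?thesis by blast
qed

lemma good_small:
  assumes g: "good R" and b0: "0 \<le> \<beta>" and minR: "\<And>R'. good R' \<Longrightarrow> card R \<le> card R'"
  shows "2 * card R \<le> card Q"
proof -
  have finR: "finite R" using g unfolding good_def by blast
  define P where "P = (\<lambda>r p. f r + f (fst p) = d r (fst p) \<and> snd p \<in> BB \<and> snd p \<in> interval d r (fst p))"
  have Pex: "\<exists>p. P r p" for r
  proof -
    obtain y where y: "f r + f y = d r y" using cover[OF fE] by blast
    obtain v where "v \<in> interval d r y" "v \<in> BB"
      using Lv[OF b0 _ y fz] fE unfolding Eprime_def by blast
    then show ?thesis using y unfolding P_def by (intro exI[of _ "(y, v)"]) auto
  qed
  define yy where "yy = (\<lambda>r. fst (SOME p. P r p))"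
  define vv where "vv = (\<lambda>r. snd (SOME p. P r p))"
  have Pr: "f r + f (yy r) = d r (yy r)" "vv r \<in> BB" "vv r \<in> interval d r (yy r)" for r
    using someI_ex[OF Pex[of r]] unfolding P_def yy_def vv_def by auto
  define \<kappa> where "\<kappa> = (\<lambda>(r, b). if b then (vv r, cone d r (vv r)) else (vv r, cone d (yy r) (vv r)))"
  define \<rho> where "\<rho> = (\<lambda>(r, b). if b then r else yy r)"
  have realk: "real_of (\<kappa> p) (\<rho> p)" for p
  proof (cases p)
    case (Pair r b)
    show ?thesis
    proof (cases b)
      case True then show ?thesis using Pr[of r] Pair unfolding \<kappa>_def \<rho>_def real_of_def by auto
    next
      case False
      have "f (yy r) + f r = d (yy r) r" using Pr(1)[of r] dsym by (simp add: add.commute)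
      moreover have "vv r \<in> interval d (yy r) r" using Pr(3)[of r] isym by blast
      ultimately show ?thesis using Pr(2)[of r] Pair False unfolding \<kappa>_def \<rho>_def real_of_def by auto
    qed
  qed
  have hrho: "Dk h \<Longrightarrow> h (\<rho> (r, b)) = (if b then h r else - h r)" for h r b
  proof (cases b)
    case False
    assume Dh: "Dk h"
    have "h r + h (yy r) = 0" using Dh Pr(1)[of r] unfolding Dk_def by blast
    then show ?thesis using False unfolding \<rho>_def by simp
  qed (simp add: \<rho>_def)
  have inj: "inj_on \<kappa> (R \<times> UNIV)"
  proof (rule inj_onI, rule ccontr)
    fix p q assume p: "p \<in> R \<times> UNIV" and q: "q \<in> R \<times> UNIV" and e: "\<kappa> p = \<kappa> q" and ne: "p \<noteq> q"
    obtain r i where pr: "p = (r, i)" by (cases p)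
    obtain r' j where qr: "q = (r', j)" by (cases q)
    have rR: "r \<in> R" "r' \<in> R" using p q pr qr by auto
    have "good (R - {r})" unfolding good_def
    proof (intro conjI allI impI)
      show "finite (R - {r})" using finR by simp
      fix h x assume Dh: "Dk h" and z0: "\<forall>s\<in>R - {r}. h s = 0"
      have same: "h (\<rho> p) = h (\<rho> q)" using real_same[OF Dh realk[of p]] realk[of q] e by simp
      have "h r = 0"
      proof (cases "r' = r")
        case True
        then have "i \<noteq> j" using ne pr qr by simp
        have "(if i then h r else - h r) = (if j then h r else - h r)"
          using same hrho[OF Dh, of r i] hrho[OF Dh, of r' j] pr qr True by simp
        with \<open>i \<noteq> j\<close> show ?thesis by (cases i) auto
      next
        case False
        then have "h r' = 0" using z0 rR by simp
        have "(if i then h r else - h r) = (if j then h r' else - h r')"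
          using same hrho[OF Dh, of r i] hrho[OF Dh, of r' j] pr qr by simp
        with \<open>h r' = 0\<close> show ?thesis by (cases i; cases j) auto
      qed
      then have "\<forall>s\<in>R. h s = 0" using z0 by blast
      then show "h x = 0" using g Dh unfolding good_def by blast
    qed
    then have "card R \<le> card (R - {r})" by (rule minR)
    moreover have "card (R - {r}) < card R" by (rule card_Diff1_less[OF finR rR(1)])
    ultimately show False by simp
  qed
  have "\<kappa> ` (R \<times> UNIV) \<subseteq> Q" using realk real_in by blast
  then have "card (R \<times> (UNIV :: bool set)) \<le> card Q" using card_inj_on_le[OF inj _ Qfin] by blast
  then show ?thesis by (simp add: card_cartesian_product)
qed


lemma part1: "2 * rk d (Apairs d f) \<le> enat (card Q)"
proof -
  define S where "S = {g. \<forall>x y. {x, y} \<in> Apairs d f \<longrightarrow> g x + g y = d x y}"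
  define dir where "dir = {(\<lambda>x. g x - h x) | g h. g \<in> S \<and> h \<in> S}"
  have rkdef: "rk d (Apairs d f) = fun_dim dir" unfolding rk_def fun_aff_dim_def S_def dir_def by simp
  have dirD: "dir \<subseteq> Collect Dk"
  proof
    fix k assume "k \<in> dir"
    then obtain g h where k: "k = (\<lambda>x. g x - h x)" "g \<in> S" "h \<in> S" unfolding dir_def by blast
    show "k \<in> Collect Dk" unfolding Dk_def
    proof (intro CollectI allI impI)
      fix x y assume "f x + f y = d x y"
      then have "{x, y} \<in> Apairs d f" using Ap_iff by blast
      then have "g x + g y = d x y" "h x + h y = d x y" using k(2,3) unfolding S_def by blast+
      then show "k x + k y = 0" using k(1) by simp
    qed
  qed
  obtain R where gR: "good R" and bR: "2 * card R \<le> card Q"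
  proof (cases "0 \<le> \<beta>")
    case True
    define PP where "PP = (\<lambda>n. \<exists>R. good R \<and> card R = n)"
    obtain R0 where R0: "good R0" using good_ex[OF True] by blast
    have "PP (card R0)" unfolding PP_def using R0 by blast
    then have "PP (Least PP)" by (rule LeastI)
    then obtain R where R: "good R" "card R = Least PP" unfolding PP_def by blast
    have minR: "card R \<le> card R'" if "good R'" for R'
    proof -
      have "PP (card R')" unfolding PP_def using that by blast
      then have "Least PP \<le> card R'" by (rule Least_le)
      then show ?thesis using R(2) by simp
    qed
    show ?thesis by (rule that[OF R(1) good_small[OF R(1) True minR]])
  next
    case False
    have eq: "x = y" for x y :: 'a using beta_nn[of x y] False by blast
    have "good {}" unfolding good_def
    proof (intro conjI allI impI)
      fix h x assume Dh: "Dk h"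
      obtain y where "f x + f y = d x y" using cover[OF fE] by blast
      then have "h x + h y = 0" using Dh unfolding Dk_def by blast
      then show "h x = 0" using eq[of y x] by simp
    qed simp
    then show ?thesis using that[of "{}"] by simp
  qed
  have "fun_dim dir \<le> enat (card Q div 2)"
    unfolding fun_dim_def
  proof (rule SUP_least)
    fix F assume "F \<in> {F. F \<subseteq> dir \<and> fun_lin_indep F}"
    then have "card F \<le> card R" using lin_to[OF gR] dirD by blast
    then show "enat (card F) \<le> enat (card Q div 2)" using bR by simp
  qed
  then obtain m where m0: "fun_dim dir = enat m" using enat_ile by blast
  then have m: "rk d (Apairs d f) = enat m" "m \<le> card Q div 2"
    using rkdef \<open>fun_dim dir \<le> enat (card Q div 2)\<close> by auto
  have "2 * m \<le> card Q" using m(2) by presburger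
  then show ?thesis using m(1) by (simp add: numeral_eq_enat)
qed

definition Sig :: "'a set \<Rightarrow> ('a \<times> 'a set) set" where
  "Sig P = {c \<in> Q. (\<exists>x. real_of c x) \<and> (\<forall>x. real_of c x \<longrightarrow> x \<in> P)}"

definition Nn :: "'a set \<Rightarrow> 'a set" where
  "Nn P = {x. \<forall>y. f x + f y = d x y \<longrightarrow> y \<in> P}"

definition Phi :: "'a set \<Rightarrow> 'a set set" where
  "Phi P = {{x, y} | x y. f x + f y = d x y \<and> ((x \<in> P \<and> y \<in> Nn P) \<or> (x \<in> Nn P \<and> y \<in> P)
       \<or> (x \<notin> P \<and> x \<notin> Nn P \<and> y \<notin> P \<and> y \<notin> Nn P))}"

context
  fixes f' :: "'a \<Rightarrow> real"
  assumes f'E: "f' \<in> Eprime d" and sub: "Apairs d f' \<subseteq> Apairs d f"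
begin

lemma t'_t: "f' x + f' y = d x y \<Longrightarrow> f x + f y = d x y"
  using sub Ap_iff by blast

lemma hsum_nn: "f x + f y = d x y \<Longrightarrow> (f' x - f x) + (f' y - f y) \<ge> 0"
  using EDelta[OF f'E, of x y] by linarith

lemma hsum0: "f' x + f' y = d x y \<Longrightarrow> (f' x - f x) + (f' y - f y) = 0"
  using t'_t[of x y] by linarith

lemma vals:
  assumes rk1: "rk d (Apairs d f') = 1"
    and x1: "f' x1 - f x1 \<noteq> 0" and x2: "f' x2 - f x2 \<noteq> 0"
  shows "\<bar>f' x1 - f x1\<bar> = \<bar>f' x2 - f x2\<bar>"
proof (rule ccontr)
  assume ne: "\<bar>f' x1 - f x1\<bar> \<noteq> \<bar>f' x2 - f x2\<bar>"
  define h where "h = (\<lambda>x. f' x - f x)"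
  define S' where "S' = {g. \<forall>x y. {x, y} \<in> Apairs d f' \<longrightarrow> g x + g y = d x y}"
  define dir where "dir = {(\<lambda>x. g x - g' x) | g g'. g \<in> S' \<and> g' \<in> S'}"
  have rkdef: "rk d (Apairs d f') = fun_dim dir" unfolding rk_def fun_aff_dim_def S'_def dir_def by simp
  define k where "k = (\<lambda>t x. if \<bar>h x\<bar> = t then sgn (h x) else 0)"
  have kin: "k t \<in> dir" if "t > 0" for t
  proof -
    have "(\<lambda>x. f' x + k t x) \<in> S'" unfolding S'_def
    proof (intro CollectI allI impI)
      fix x y assume "{x, y} \<in> Apairs d f'"
      then have t: "f' x + f' y = d x y" using Ap_iff by blast
      then have "h y = - h x" using hsum0 unfolding h_def by fastforce
      then have "k t x + k t y = 0" unfolding k_def by (simp add: sgn_minus)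
      then show "f' x + k t x + (f' y + k t y) = d x y" using t by simp
    qed
    moreover have "f' \<in> S'" unfolding S'_def using Ap_iff by blast
    moreover have "k t = (\<lambda>x. (f' x + k t x) - f' x)" by simp
    ultimately show ?thesis unfolding dir_def
      by (simp only: mem_Collect_eq) (rule exI[of _ "\<lambda>x. f' x + k t x"], rule exI[of _ f'], simp)
  qed
  define t1 where "t1 = \<bar>h x1\<bar>"
  define t2 where "t2 = \<bar>h x2\<bar>"
  have t12: "t1 > 0" "t2 > 0" "t1 \<noteq> t2" using x1 x2 ne unfolding t1_def t2_def h_def by auto
  have k11: "k t1 x1 \<noteq> 0" "k t2 x1 = 0" "k t1 x2 = 0" "k t2 x2 \<noteq> 0"
    using t12 x1 x2 unfolding k_def t1_def t2_def h_def by (auto simp: sgn_eq_0_iff)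
  have kne: "k t1 \<noteq> k t2" using k11 by metis
  have ind: "fun_lin_indep {k t1, k t2}" unfolding fun_lin_indep_def
  proof (intro conjI allI impI)
    fix c assume h0: "\<forall>x. (\<Sum>g\<in>{k t1, k t2}. c g * g x) = 0"
    have e: "c (k t1) * k t1 x + c (k t2) * k t2 x = 0" for x
      using h0[rule_format, of x] kne by simp
    have "c (k t1) = 0" using e[of x1] k11 by simp
    moreover have "c (k t2) = 0" using e[of x2] k11 by simp
    ultimately show "\<forall>g\<in>{k t1, k t2}. c g = 0" by blast
  qed simp
  have "{k t1, k t2} \<in> {F. F \<subseteq> dir \<and> fun_lin_indep F}" using kin t12 ind by blast
  then have "enat (card {k t1, k t2}) \<le> fun_dim dir" unfolding fun_dim_def by (rule SUP_upper)
  then show False using kne rk1 rkdef by (simp add: one_enat_def)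
qed

lemma Nchar:
  shows "Nn {x. f' x - f x > 0} = {x. f' x - f x < 0}"
proof
  show "Nn {x. f' x - f x > 0} \<subseteq> {x. f' x - f x < 0}"
  proof
    fix x assume "x \<in> Nn {x. f' x - f x > 0}"
    then have a: "\<forall>y. f x + f y = d x y \<longrightarrow> f' y - f y > 0" unfolding Nn_def by simp
    obtain y where y: "f' x + f' y = d x y" using cover[OF f'E] by blast
    have "f' y - f y > 0" using a t'_t[OF y] by blast
    then show "x \<in> {x. f' x - f x < 0}" using hsum0[OF y] by simp
  qed
next
  show "{x. f' x - f x < 0} \<subseteq> Nn {x. f' x - f x > 0}"
    unfolding Nn_def using hsum_nn by fastforce
qed

lemma Phi_eq:
  assumes rk1: "rk d (Apairs d f') = 1"
  shows "Apairs d f' = Phi {x. f' x - f x > 0}"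
proof -
  have iff: "f' x + f' y = d x y \<longleftrightarrow> f x + f y = d x y \<and>
      ((f' x - f x > 0 \<and> f' y - f y < 0) \<or> (f' x - f x < 0 \<and> f' y - f y > 0) \<or>
       (f' x - f x = 0 \<and> f' y - f y = 0))" for x y
  proof
    assume t: "f' x + f' y = d x y"
    then show "f x + f y = d x y \<and>
      ((f' x - f x > 0 \<and> f' y - f y < 0) \<or> (f' x - f x < 0 \<and> f' y - f y > 0) \<or>
       (f' x - f x = 0 \<and> f' y - f y = 0))"
      using t'_t[OF t] hsum0[OF t] by auto
  next
    assume a: "f x + f y = d x y \<and>
      ((f' x - f x > 0 \<and> f' y - f y < 0) \<or> (f' x - f x < 0 \<and> f' y - f y > 0) \<or>
       (f' x - f x = 0 \<and> f' y - f y = 0))"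
    have "(f' x - f x) + (f' y - f y) = 0"
    proof (cases "f' x - f x = 0")
      case True then show ?thesis using a by auto
    next
      case False
      then have "f' y - f y \<noteq> 0" using a by auto
      then have "\<bar>f' x - f x\<bar> = \<bar>f' y - f y\<bar>" using vals[OF rk1 False] by blast
      then show ?thesis using a by auto
    qed
    then show "f' x + f' y = d x y" using a by linarith
  qed
  have N: "Nn {x. f' x - f x > 0} = {x. f' x - f x < 0}" by (rule Nchar)
  define P where "P = {x. f' x - f x > 0}"
  have iff': "(f' x + f' y = d x y) = (f x + f y = d x y \<and> ((x \<in> P \<and> y \<in> Nn P) \<or> (x \<in> Nn P \<and> y \<in> P)
       \<or> (x \<notin> P \<and> x \<notin> Nn P \<and> y \<notin> P \<and> y \<notin> Nn P)))" for x y
    unfolding P_def N using iff[of x y] by auto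
  show ?thesis unfolding Phi_def Apairs_def P_def[symmetric] by (simp only: iff')
qed

lemma Prec:
  assumes "0 < f' x - f x"
  shows "\<exists>c\<in>Sig {x. f' x - f x > 0}. real_of c x"
proof -
  obtain y where y: "f' x + f' y = d x y" using cover[OF f'E] by blast
  have hy: "f' y - f y < 0" using hsum0[OF y] assms by linarith
  have "x \<noteq> y" using hy assms by auto
  then have b0: "0 \<le> \<beta>" by (rule beta_nn)
  have ty: "f x + f y = d x y" using t'_t[OF y] .
  obtain v where v: "v \<in> interval d x y" "v \<in> BB"
    using Lv[OF b0 _ ty fz] fE unfolding Eprime_def by blast
  define c where "c = (v, cone d x v)"
  have rc: "real_of c x" unfolding real_of_def c_def using ty v by blast
  have "\<forall>x1. real_of c x1 \<longrightarrow> x1 \<in> {x. f' x - f x > 0}"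
  proof (intro allI impI)
    fix x1 assume r1: "real_of c x1"
    have "f x1 + f y = d x1 y" using real_tight[OF r1 rc ty] v(1) unfolding c_def by simp
    then have "(f' x1 - f x1) + (f' y - f y) \<ge> 0" by (rule hsum_nn)
    then show "x1 \<in> {x. f' x - f x > 0}" using hy by simp
  qed
  then have "c \<in> Sig {x. f' x - f x > 0}" unfolding Sig_def using rc real_in by blast
  then show ?thesis using rc by blast
qed

end

lemma part2:
  "finite {A \<in> Acal d. A \<subseteq> Apairs d f \<and> rk d A = 1}
   \<and> card {A \<in> Acal d. A \<subseteq> Apairs d f \<and> rk d A = 1} \<le> 2 ^ card Q"
proof -
  define SS where "SS = {A \<in> Acal d. A \<subseteq> Apairs d f \<and> rk d A = 1}"
  define fp where "fp = (\<lambda>A. SOME f'. f' \<in> Eprime d \<and> Apairs d f' = A)"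
  have fp: "fp A \<in> Eprime d" "Apairs d (fp A) = A" if "A \<in> SS" for A
  proof -
    have "\<exists>f'. f' \<in> Eprime d \<and> Apairs d f' = A" using that unfolding SS_def Acal_def by blast
    then have "fp A \<in> Eprime d \<and> Apairs d (fp A) = A" unfolding fp_def by (rule someI_ex)
    then show "fp A \<in> Eprime d" "Apairs d (fp A) = A" by auto
  qed
  define Pp where "Pp = (\<lambda>A. {x. fp A x - f x > 0})"
  have PpA: "A = Phi (Pp A)" if "A \<in> SS" for A
  proof -
    have "Apairs d (fp A) \<subseteq> Apairs d f" "rk d (Apairs d (fp A)) = 1"
      using that fp[OF that] unfolding SS_def by auto
    then show ?thesis using Phi_eq[OF fp(1)[OF that]] fp(2)[OF that] unfolding Pp_def by metis
  qed
  have rec: "Pp A = {x. \<exists>c\<in>Sig (Pp A). real_of c x}" if "A \<in> SS" for A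
  proof
    have s: "Apairs d (fp A) \<subseteq> Apairs d f" using that fp[OF that] unfolding SS_def by auto
    show "Pp A \<subseteq> {x. \<exists>c\<in>Sig (Pp A). real_of c x}"
      using Prec[OF fp(1)[OF that] s] unfolding Pp_def by blast
    show "{x. \<exists>c\<in>Sig (Pp A). real_of c x} \<subseteq> Pp A" unfolding Sig_def by blast
  qed
  have inj: "inj_on (\<lambda>A. Sig (Pp A)) SS"
  proof (rule inj_onI)
    fix A1 A2 assume a: "A1 \<in> SS" "A2 \<in> SS" "Sig (Pp A1) = Sig (Pp A2)"
    then have "Pp A1 = Pp A2" using rec[OF a(1)] rec[OF a(2)] by simp
    then show "A1 = A2" using PpA[OF a(1)] PpA[OF a(2)] by simp
  qed
  have img: "(\<lambda>A. Sig (Pp A)) ` SS \<subseteq> Pow Q" unfolding Sig_def by auto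
  have "finite SS" using inj_on_finite[OF inj img] Qfin by simp
  moreover have "card SS \<le> card (Pow Q)" using card_inj_on_le[OF inj img] Qfin by simp
  ultimately show ?thesis unfolding SS_def using card_Pow[OF Qfin] by simp
qed

end

theorem proposition5p12:
  fixes d :: "'a \<Rightarrow> 'a \<Rightarrow> real" and \<beta> \<alpha> :: real and z :: 'a
  assumes "metric_on d"
    and "discretely_geodesic d"
    and "stable_intervals d \<beta>"
    and "bounded_subsets_finite d"
    and "\<alpha> > 0"
  defines "B \<equiv> closed_ball_d d z (2 * \<alpha> * \<beta>)"
  shows "finite (pointed_cones d B)
    \<and> (\<forall>f \<in> Eprime d. f z \<le> \<alpha> \<longrightarrow> 2 * rk d (Apairs d f) \<le> enat (card (pointed_cones d B)))
    \<and> (\<forall>f \<in> Eprime d. f z \<le> \<alpha> \<and> rk d (Apairs d f) = 0 \<longrightarrow>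
         finite {A \<in> Acal d. A \<subseteq> Apairs d f \<and> rk d A = 1}
         \<and> card {A \<in> Acal d. A \<subseteq> Apairs d f \<and> rk d A = 1} \<le> 2 ^ card (pointed_cones d B))"
proof -
  interpret X d \<beta> using assms(1-4) by unfold_locales
  have fin: "finite B" unfolding B_def closed_ball_d_def by (rule ball_fin)
  have P0: "finite (pointed_cones d B)" by (rule pc_fin[OF fin])
  have P1: "\<forall>f \<in> Eprime d. f z \<le> \<alpha> \<longrightarrow> 2 * rk d (Apairs d f) \<le> enat (card (pointed_cones d B))"
  proof (intro ballI impI)
    fix f assume f: "f \<in> Eprime d" "f z \<le> \<alpha>"
    interpret Y d \<beta> f \<alpha> z using assms(1-4) f by unfold_locales
    show "2 * rk d (Apairs d f) \<le> enat (card (pointed_cones d B))" unfolding B_def by (rule part1)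
  qed
  have P2: "\<forall>f \<in> Eprime d. f z \<le> \<alpha> \<and> rk d (Apairs d f) = 0 \<longrightarrow>
         finite {A \<in> Acal d. A \<subseteq> Apairs d f \<and> rk d A = 1}
         \<and> card {A \<in> Acal d. A \<subseteq> Apairs d f \<and> rk d A = 1} \<le> 2 ^ card (pointed_cones d B)"
  proof (intro ballI impI)
    fix f assume f: "f \<in> Eprime d" "f z \<le> \<alpha> \<and> rk d (Apairs d f) = 0"
    interpret Y d \<beta> f \<alpha> z using assms(1-4) f by unfold_locales auto
    show "finite {A \<in> Acal d. A \<subseteq> Apairs d f \<and> rk d A = 1}
         \<and> card {A \<in> Acal d. A \<subseteq> Apairs d f \<and> rk d A = 1} \<le> 2 ^ card (pointed_cones d B)"
      unfolding B_def by (rule part2)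
  qed
  show ?thesis using P0 P1 P2 by blast
qed

end
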